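(* Let $H$ be a non-trivial connected core. Then there exist a graph $F$ and vertices $u^*,v^*\in V(F)$ such that (a) for all distinct $x,y\in V(H)$ there is a homomorphism $f\colon F\to H$ with $f(u^* )=x$ and $f(v^* )=y$, and (b) every homomorphism $f\colon F\to H$ satisfies $f(u^* )\ne f(v^* )$, if and only if $H$ is projective.
   Context: Graphs are finite, undirected, without parallel edges, loops allowed; $K_1^*$ is the one-vertex graph with a loop. A homomorphism is an edge-preserving vertex map. A core is a graph with no homomorphism to a proper subgraph of itself; it is trivial if isomorphic to $K_1$, $K_1^*$ or $K_2$, non-trivial otherwise. The direct product $H_1\times H_2$ has vertex set $V(H_1)\times V(H_2)$ with $(x_1,y_1)(x_2,y_2)$ an edge iff $x_1x_2\in E(H_1)$ and $y_1y_2\in E(H_2)$; $H^m$ is the $m$-fold product and $\pi_i(x_1,\dots,x_m)=x_i$. A homomorphism $f\colon H^m\to H$ is idempotent if $f(x,\dots,x)=x$ for all $x$. $H$ is projective if for every $m\ge2$ every idempotent homomorphism $H^m\to H$ equals some $\pi_i$. One may use the theorem of Larose and Tardif: a graph with at least three vertices is projective iff every subset $C\subseteq V(H)$ is constructible, where $C$ is constructible if there are a graph $K$, vertices $x_0,\dots,x_\ell\in V(K)$ and $y_1,\dots,y_\ell\in V(H)$ such that $C=\{y\in V(H):\exists f\colon K\to H \text{ with } f(x_i)=y_i\ (i\in[\ell]) \text{ and } f(x_0)=y\}$. *)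

theory Defs
  imports Main "HOL-Library.FuncSet"
begin

record 'a ugraph =
  verts :: "'a set"
  adj :: "'a \<Rightarrow> 'a \<Rightarrow> bool"

definition wf_graph :: "'a ugraph \<Rightarrow> bool" where
  "wf_graph G \<longleftrightarrow> finite (verts G)
     \<and> (\<forall>x y. adj G x y \<longrightarrow> x \<in> verts G \<and> y \<in> verts G)
     \<and> (\<forall>x y. adj G x y \<longrightarrow> adj G y x)"

definition hom :: "'a ugraph \<Rightarrow> 'b ugraph \<Rightarrow> ('a \<Rightarrow> 'b) \<Rightarrow> bool" where
  "hom G H f \<longleftrightarrow> (\<forall>x\<in>verts G. f x \<in> verts H)
     \<and> (\<forall>x y. adj G x y \<longrightarrow> adj H (f x) (f y))"

definition subgraph :: "'a ugraph \<Rightarrow> 'a ugraph \<Rightarrow> bool" where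
  "subgraph G' G \<longleftrightarrow> wf_graph G' \<and> verts G' \<subseteq> verts G
     \<and> (\<forall>x y. adj G' x y \<longrightarrow> adj G x y)"

definition core :: "'a ugraph \<Rightarrow> bool" where
  "core H \<longleftrightarrow> wf_graph H
     \<and> \<not> (\<exists>H' f. subgraph H' H \<and> H' \<noteq> H \<and> hom H H' f)"

definition graph_iso :: "'a ugraph \<Rightarrow> 'b ugraph \<Rightarrow> bool" where
  "graph_iso G H \<longleftrightarrow> (\<exists>f. bij_betw f (verts G) (verts H)
     \<and> (\<forall>x\<in>verts G. \<forall>y\<in>verts G. adj G x y \<longleftrightarrow> adj H (f x) (f y)))"

definition K1 :: "unit ugraph" where
  "K1 = \<lparr>verts = {()}, adj = (\<lambda>x y. False)\<rparr>"

definition K1_loop :: "unit ugraph" where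
  "K1_loop = \<lparr>verts = {()}, adj = (\<lambda>x y. True)\<rparr>"

definition K2 :: "bool ugraph" where
  "K2 = \<lparr>verts = UNIV, adj = (\<lambda>x y. x \<noteq> y)\<rparr>"

definition trivial_graph :: "'a ugraph \<Rightarrow> bool" where
  "trivial_graph H \<longleftrightarrow> graph_iso H K1 \<or> graph_iso H K1_loop \<or> graph_iso H K2"

definition connected :: "'a ugraph \<Rightarrow> bool" where
  "connected H \<longleftrightarrow> verts H \<noteq> {}
     \<and> (\<forall>x\<in>verts H. \<forall>y\<in>verts H. (adj H)\<^sup>*\<^sup>* x y)"

definition power :: "'a ugraph \<Rightarrow> nat \<Rightarrow> (nat \<Rightarrow> 'a) ugraph" where
  "power H m = \<lparr>verts = PiE {..<m} (\<lambda>_. verts H),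
     adj = (\<lambda>x y. x \<in> PiE {..<m} (\<lambda>_. verts H) \<and> y \<in> PiE {..<m} (\<lambda>_. verts H)
                 \<and> (\<forall>i<m. adj H (x i) (y i)))\<rparr>"

definition idempotent_hom :: "'a ugraph \<Rightarrow> nat \<Rightarrow> ((nat \<Rightarrow> 'a) \<Rightarrow> 'a) \<Rightarrow> bool" where
  "idempotent_hom H m f \<longleftrightarrow> hom (power H m) H f
     \<and> (\<forall>x\<in>verts H. f (\<lambda>i\<in>{..<m}. x) = x)"

definition projective :: "'a ugraph \<Rightarrow> bool" where
  "projective H \<longleftrightarrow> (\<forall>m\<ge>2. \<forall>f. idempotent_hom H m f \<longrightarrow>
     (\<exists>i<m. \<forall>x\<in>verts (power H m). f x = x i))"

end

theory Submission
  imports Defs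
begin


definition TT :: "nat \<Rightarrow> nat set \<Rightarrow> 'a \<Rightarrow> 'a \<Rightarrow> (nat \<Rightarrow> 'a)" where
  "TT m S x y = (\<lambda>i\<in>{..<m}. if i \<in> S then x else y)"

lemma clone_lemma:
  fixes V :: "'a set" and f :: "(nat \<Rightarrow> 'a) \<Rightarrow> 'a"
  assumes three: "a \<in> V" "b \<in> V" "c \<in> V" "a \<noteq> b" "a \<noteq> c" "b \<noteq> c"
  and fV: "\<And>t. t \<in> PiE {..<m} (\<lambda>_. V) \<Longrightarrow> f t \<in> V"
  and NE: "\<And>t s. t \<in> PiE {..<m} (\<lambda>_. V) \<Longrightarrow> s \<in> PiE {..<m} (\<lambda>_. V) \<Longrightarrow>
              (\<forall>i<m. t i \<noteq> s i) \<Longrightarrow> f t \<noteq> f s"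
  and ID: "\<And>x. x \<in> V \<Longrightarrow> f (\<lambda>i\<in>{..<m}. x) = x"
  shows "\<exists>i<m. \<forall>t\<in>PiE {..<m} (\<lambda>_. V). f t = t i"
proof -
  define P where "P = PiE {..<m} (\<lambda>_. V)"
  have TP: "TT m S x y \<in> P" if "x \<in> V" "y \<in> V" for S x y
    using that by (simp add: P_def TT_def restrict_PiE_iff)
  have TTi: "i < m \<Longrightarrow> TT m S x y i = (if i \<in> S then x else y)" for i S x y
    by (simp add: TT_def)
  have cons: "f t \<in> t ` {..<m}" if "t \<in> P" for t
  proof (rule ccontr)
    assume nin: "f t \<notin> t ` {..<m}"
    have "f t \<in> V" using fV that P_def by auto
    moreover have "(\<lambda>i\<in>{..<m}. f t) \<in> P" using \<open>f t \<in> V\<close> by (simp add: P_def restrict_PiE_iff)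
    moreover have "\<forall>i<m. t i \<noteq> (\<lambda>i\<in>{..<m}. f t) i" using nin by force
    ultimately have "f t \<noteq> f (\<lambda>i\<in>{..<m}. f t)"
      using NE[of t "\<lambda>i\<in>{..<m}. f t"] that P_def by auto
    then show False using ID \<open>f t \<in> V\<close> by simp
  qed
  have cons2: "f (TT m S x y) = x \<or> f (TT m S x y) = y" if "x \<in> V" "y \<in> V" for S x y
    using cons[OF TP[OF that, of S]] by (auto simp: TTi split: if_splits)
  have NT: "f (TT m S x y) \<noteq> f (TT m S' x' y')"
    if "x \<in> V" "y \<in> V" "x' \<in> V" "y' \<in> V"
       "\<And>i. i < m \<Longrightarrow> (if i \<in> S then x else y) \<noteq> (if i \<in> S' then x' else y')" for S S' x y x' y'
  proof -
    have "\<forall>i<m. TT m S x y i \<noteq> TT m S' x' y' i" using that(5) by (simp add: TT_def)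
    then show ?thesis using NE[of "TT m S x y" "TT m S' x' y'"] TP that P_def by auto
  qed
  have clsf: "(\<forall>x\<in>V. \<forall>y\<in>V. x \<noteq> y \<longrightarrow> f (TT m S x y) = x)
             \<or> (\<forall>x\<in>V. \<forall>y\<in>V. x \<noteq> y \<longrightarrow> f (TT m S x y) = y)" for S
  proof (rule ccontr)
    define g where "g x y = f (TT m S x y)" for x y
    have g2: "g x y = x \<or> g x y = y" if "x \<in> V" "y \<in> V" for x y
      using cons2 that g_def by auto
    have R1: "g x y \<noteq> g y x" if "x \<in> V" "y \<in> V" "x \<noteq> y" for x y
      unfolding g_def by (rule NT) (use that in auto)
    have R2: "g x y \<noteq> g z x" if "x \<in> V" "y \<in> V" "z \<in> V" "x \<noteq> y" "z \<noteq> x" "z \<noteq> y" for x y z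
      unfolding g_def by (rule NT) (use that in auto)
    have sym: "g y x = y" if "g x y = x" "x \<in> V" "y \<in> V" "x \<noteq> y" for x y
      using R1[of x y] g2[of y x] that by auto
    have rot: "g z x = z" if "g x y = x" "x \<in> V" "y \<in> V" "z \<in> V" "x \<noteq> y" "z \<noteq> x" "z \<noteq> y" for x y z
      using R2[of x y z] g2[of z x] that by auto
    assume "\<not> ?thesis"
    then obtain p q where pq: "p \<in> V" "q \<in> V" "p \<noteq> q" "g p q \<noteq> p"
      and ab: "\<exists>a\<in>V. \<exists>b\<in>V. a \<noteq> b \<and> g a b \<noteq> b" unfolding g_def by blast
    then obtain a b where ab: "a \<in> V" "b \<in> V" "a \<noteq> b" "g a b = a" using g2 by blast
    have za: "g z a = z" if "z \<in> V" "z \<noteq> a" for z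
    proof (cases "z = b")
      case True then show ?thesis using sym ab by auto
    next
      case False then show ?thesis using rot[of a b z] ab that by auto
    qed
    have az: "g a z = a" if "z \<in> V" "z \<noteq> a" for z
      using sym[OF za[OF that]] that ab by auto
    have "g p q = p"
    proof (cases "p = a")
      case True then show ?thesis using az pq by auto
    next
      case pa: False
      show ?thesis
      proof (cases "q = a")
        case True then show ?thesis using za pq pa by auto
      next
        case False
        then show ?thesis using rot[of q a p] za[of q] pq pa ab by auto
      qed
    qed
    then show False using pq by simp
  qed
  define U where "U = {S. S \<subseteq> {..<m} \<and> (\<forall>x\<in>V. \<forall>y\<in>V. x \<noteq> y \<longrightarrow> f (TT m S x y) = x)}"
  have key: "{i. i < m \<and> t i = f t} \<in> U" if "t \<in> P" for t
  proof -
    define x where "x = f t"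
    define S where "S = {i. i < m \<and> t i = x}"
    have xV: "x \<in> V" using fV that P_def x_def by auto
    have tV: "i < m \<Longrightarrow> t i \<in> V" for i using that P_def by auto
    obtain y where y: "y \<in> V" "y \<noteq> x" using three by metis
    have "f (TT m S x y) \<noteq> y"
    proof
      assume fy: "f (TT m S x y) = y"
      have "\<forall>i<m. t i \<noteq> TT m S y x i" using y by (auto simp: TT_def S_def)
      then have "f (TT m S y x) \<noteq> x"
        using NE[of t "TT m S y x"] that TP[OF y(1) xV] x_def by (auto simp: P_def)
      moreover have "f (TT m S y x) \<noteq> y"
        using fy NT[of x y y x S S] xV y by (metis (full_types))
      ultimately show False using cons2[OF y(1) xV, of S] by auto
    qed
    then have "f (TT m S x y) = x" using cons2[OF xV y(1)] by auto
    then have "\<not> (\<forall>x\<in>V. \<forall>y\<in>V. x \<noteq> y \<longrightarrow> f (TT m S x y) = y)" using xV y by metis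
    then show ?thesis using clsf[of S] unfolding U_def S_def x_def by auto
  qed
  have compl: "{..<m} - S \<in> U" if "S \<subseteq> {..<m}" "S \<notin> U" for S
  proof -
    have "\<forall>x\<in>V. \<forall>y\<in>V. x \<noteq> y \<longrightarrow> f (TT m S x y) = y" using clsf[of S] that U_def by auto
    moreover have "TT m ({..<m} - S) x y = TT m S y x" for x y
      by (auto simp: TT_def)
    ultimately have "\<forall>x\<in>V. \<forall>y\<in>V. x \<noteq> y \<longrightarrow> f (TT m ({..<m} - S) x y) = x" by metis
    then show ?thesis unfolding U_def by auto
  qed
  have disj: False if "A \<in> U" "B \<in> U" "A \<inter> B = {}" for A B
  proof -
    have "f (TT m A a b) = a" "f (TT m B a c) = a" using that three U_def by auto
    moreover have "f (TT m A a b) \<noteq> f (TT m B a c)"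
      by (rule NT) (use three that in auto)
    ultimately show False by simp
  qed
  have mono: "T \<in> U" if "S \<in> U" "S \<subseteq> T" "T \<subseteq> {..<m}" for S T
  proof (rule ccontr)
    assume "T \<notin> U"
    then have "{..<m} - T \<in> U" using compl that by auto
    then show False using disj[of S "{..<m} - T"] that by auto
  qed
  have inter: "S \<inter> T \<in> U" if "S \<in> U" "T \<in> U" for S T
  proof -
    define t where "t = (\<lambda>i\<in>{..<m}. if i \<in> S then (if i \<in> T then a else b) else c)"
    have tP: "t \<in> P" using three by (simp add: t_def P_def restrict_PiE_iff)
    have "f t \<in> t ` {..<m}" using cons tP by auto
    then have "f t = a \<or> f t = b \<or> f t = c" by (auto simp: t_def split: if_splits)
    moreover have k: "{i. i < m \<and> t i = f t} \<in> U" using key tP by auto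
    have SU: "S \<subseteq> {..<m}" "T \<subseteq> {..<m}" using that U_def by auto
    have "f t \<noteq> c"
    proof
      assume "f t = c"
      then have "{i. i < m \<and> t i = f t} = {..<m} - S" using three by (auto simp: t_def)
      then show False using k disj[of S "{..<m} - S"] that by auto
    qed
    moreover have "f t \<noteq> b"
    proof
      assume "f t = b"
      then have "{i. i < m \<and> t i = f t} = S - T" using three SU by (auto simp: t_def)
      then show False using k disj[of T "S - T"] that by auto
    qed
    ultimately have "f t = a" by auto
    then have "{i. i < m \<and> t i = f t} = S \<inter> T" using three SU by (auto simp: t_def)
    then show ?thesis using k by simp
  qed
  have fullU: "{..<m} \<in> U"
  proof -
    have "{i. i < m \<and> (\<lambda>i\<in>{..<m}. a) i = f (\<lambda>i\<in>{..<m}. a)} \<in> U"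
      using key[of "\<lambda>i\<in>{..<m}. a"] three by (auto simp: P_def restrict_PiE_iff)
    moreover have "{i. i < m \<and> (\<lambda>i\<in>{..<m}. a) i = f (\<lambda>i\<in>{..<m}. a)} = {..<m}"
      using ID[OF three(1)] by auto
    ultimately show ?thesis by simp
  qed
  obtain S0 where S0: "S0 \<in> U" "\<And>S. S \<in> U \<Longrightarrow> card S0 \<le> card S"
    using ex_has_least_nat[of "\<lambda>S. S \<in> U" "{..<m}" card] fullU by blast
  have "S0 \<noteq> {}" using disj[of S0 S0] S0 by auto
  then obtain i where i: "i \<in> S0" by auto
  have S0m: "S0 \<subseteq> {..<m}" using S0 U_def by auto
  then have im: "i < m" using i by auto
  have "{i} \<in> U"
  proof (rule ccontr)
    assume "{i} \<notin> U"
    then have "{..<m} - {i} \<in> U" using compl im by auto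
    then have "S0 \<inter> ({..<m} - {i}) \<in> U" using inter S0 by auto
    moreover have "S0 \<inter> ({..<m} - {i}) = S0 - {i}" using S0m by auto
    moreover have "card (S0 - {i}) < card S0"
      using i finite_subset[OF S0m] by (meson card_Diff1_less finite_lessThan)
    ultimately show False using S0(2) by fastforce
  qed
  have inS: "i \<in> S" if "S \<in> U" for S
    using disj[of "{i}" S] that \<open>{i} \<in> U\<close> by auto
  show ?thesis
  proof (intro exI[of _ i] conjI ballI)
    show "i < m" by (rule im)
    fix t assume "t \<in> PiE {..<m} (\<lambda>_. V)"
    then have "i \<in> {i. i < m \<and> t i = f t}" using inS key unfolding P_def by blast
    then show "f t = t i" by simp
  qed
qed




lemma three_verts:
  fixes H :: "'a ugraph"
  assumes core: "core H" and conn: "connected H" and nt: "\<not> trivial_graph H"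
  shows "\<exists>a b c. a \<in> verts H \<and> b \<in> verts H \<and> c \<in> verts H \<and> a \<noteq> b \<and> a \<noteq> c \<and> b \<noteq> c"
proof (rule ccontr)
  assume no3: "\<not> ?thesis"
  have wf: "wf_graph H" using core core_def by auto
  obtain a where a: "a \<in> verts H" using conn unfolding connected_def by blast
  have noloop: False if "adj H a' a'" "a' \<in> verts H" "verts H \<noteq> {a'}" for a'
  proof -
    let ?H' = "\<lparr>verts = {a'}, adj = (\<lambda>x y. x = a' \<and> y = a')\<rparr> :: 'a ugraph"
    have "subgraph ?H' H" using that by (auto simp: subgraph_def wf_graph_def)
    moreover have "?H' \<noteq> H" using that by auto
    moreover have "hom H ?H' (\<lambda>_. a')" by (auto simp: hom_def)
    ultimately show False using core core_def by blast
  qed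
  show False
  proof (cases "verts H = {a}")
    case True
    show False
    proof (cases "adj H a a")
      case True
      have "graph_iso H K1_loop"
        unfolding graph_iso_def K1_loop_def using \<open>verts H = {a}\<close> True
        by (intro exI[of _ "\<lambda>_. ()"]) (auto simp: bij_betw_def inj_on_def)
      then show False using nt trivial_graph_def by auto
    next
      case False
      have "graph_iso H K1"
        unfolding graph_iso_def K1_def using \<open>verts H = {a}\<close> False
        by (intro exI[of _ "\<lambda>_. ()"]) (auto simp: bij_betw_def inj_on_def)
      then show False using nt trivial_graph_def by auto
    qed
  next
    case False
    then obtain b where b: "b \<in> verts H" "b \<noteq> a" using a by blast
    have V: "verts H = {a, b}" using no3 a b by blast
    have ab: "adj H a b"
    proof (rule ccontr)
      assume nab: "\<not> adj H a b"
      have "(adj H)\<^sup>*\<^sup>* a y \<Longrightarrow> y = a" for y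
      proof (induction rule: rtranclp_induct)
        case base then show ?case by simp
        case (step y z)
        then have "z \<in> verts H" using wf[unfolded wf_graph_def] by auto
        then show ?case using step nab V by auto
      qed
      then show False using conn[unfolded connected_def] a b by auto
    qed
    have ba: "adj H b a" using ab wf[unfolded wf_graph_def] by auto
    have na: "\<not> adj H a a" using noloop[of a] a V b by auto
    have nb: "\<not> adj H b b" using noloop[of b] b V by auto
    have adjH: "x \<in> verts H \<Longrightarrow> y \<in> verts H \<Longrightarrow> adj H x y \<longleftrightarrow> x \<noteq> y" for x y
      using V ab ba na nb by auto
    have "bij_betw (\<lambda>x. x = a) (verts H) (UNIV :: bool set)"
      unfolding bij_betw_def inj_on_def using V b by auto
    then have "graph_iso H K2"
      unfolding graph_iso_def K2_def using adjH V
      by (intro exI[of _ "\<lambda>x. x = a"]) auto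
    then show False using nt trivial_graph_def by auto
  qed
qed

lemma core_endo:
  fixes H :: "'a ugraph"
  assumes core: "core H" and h: "hom H H s"
  shows "s ` verts H = verts H" "inj_on s (verts H)"
    "\<And>p q. adj H p q \<Longrightarrow> \<exists>x y. adj H x y \<and> s x = p \<and> s y = q"
proof -
  have wf: "wf_graph H" using core core_def by auto
  let ?H' = "\<lparr>verts = s ` verts H, adj = (\<lambda>p q. \<exists>x y. adj H x y \<and> s x = p \<and> s y = q)\<rparr> :: 'a ugraph"
  have wfH': "wf_graph ?H'"
    unfolding wf_graph_def
  proof (intro conjI allI impI)
    show "finite (verts ?H')" using wf[unfolded wf_graph_def] by auto
  next
    fix p q assume "adj ?H' p q"
    then obtain x y where xy: "adj H x y" "s x = p" "s y = q" by auto
    then have "x \<in> verts H" "y \<in> verts H" "adj H y x" using wf[unfolded wf_graph_def] by auto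
    then show "p \<in> verts ?H'" "q \<in> verts ?H'" "adj ?H' q p" using xy by auto
  qed
  have "subgraph ?H' H" unfolding subgraph_def
  proof (intro conjI allI impI wfH')
    show "verts ?H' \<subseteq> verts H" using h[unfolded hom_def] by auto
    fix p q assume "adj ?H' p q"
    then show "adj H p q" using h[unfolded hom_def] by auto
  qed
  moreover have "hom H ?H' s" unfolding hom_def by auto
  ultimately have eq: "?H' = H" using core[unfolded core_def] by blast
  have "verts ?H' = verts H" using eq by simp
  then show sv: "s ` verts H = verts H" by simp
  have fin: "finite (verts H)" using wf[unfolded wf_graph_def] by auto
  show "inj_on s (verts H)" using sv fin by (intro finite_surj_inj) auto
  have ad: "adj ?H' = adj H" using eq by simp
  fix p q assume "adj H p q"
  then have "adj ?H' p q" using ad by simp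
  then show "\<exists>x y. adj H x y \<and> s x = p \<and> s y = q" by simp
qed




lemma verts_power: "verts (power H m) = PiE {..<m} (\<lambda>_. verts H)"
  by (simp add: power_def)

lemma adj_power: "adj (power H m) x y \<longleftrightarrow> x \<in> PiE {..<m} (\<lambda>_. verts H) \<and> y \<in> PiE {..<m} (\<lambda>_. verts H)
                 \<and> (\<forall>i<m. adj H (x i) (y i))"
  by (simp add: power_def)

lemma dir1:
  fixes H :: "'a ugraph" and F :: "nat ugraph"
  assumes wfH: "wf_graph H" and three: "a \<in> verts H" "b \<in> verts H" "c \<in> verts H" "a \<noteq> b" "a \<noteq> c" "b \<noteq> c"
  and wfF: "wf_graph F"
  and A: "\<forall>x\<in>verts H. \<forall>y\<in>verts H. x \<noteq> y \<longrightarrow> (\<exists>f. hom F H f \<and> f u = x \<and> f v = y)"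
  and B: "\<forall>f. hom F H f \<longrightarrow> f u \<noteq> f v"
  shows "projective H"
  unfolding projective_def
proof (intro allI impI)
  fix m :: nat and f assume m2: "2 \<le> m" and idem: "idempotent_hom H m f"
  have hf: "hom (power H m) H f" and ID: "\<And>x. x \<in> verts H \<Longrightarrow> f (\<lambda>i\<in>{..<m}. x) = x"
    using idem[unfolded idempotent_hom_def] by auto
  have fV: "f t \<in> verts H" if "t \<in> PiE {..<m} (\<lambda>_. verts H)" for t
    using hf that unfolding hom_def verts_power by blast
  have NE: "f t \<noteq> f s" if ts: "t \<in> PiE {..<m} (\<lambda>_. verts H)" "s \<in> PiE {..<m} (\<lambda>_. verts H)"
     and d: "\<forall>i<m. t i \<noteq> s i" for t s
  proof -
    have "\<forall>i. \<exists>g. i < m \<longrightarrow> (hom F H g \<and> g u = t i \<and> g v = s i)"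
      using A ts d by (metis PiE_mem lessThan_iff)
    then obtain g where g: "\<And>i. i < m \<Longrightarrow> hom F H (g i) \<and> g i u = t i \<and> g i v = s i"
      by metis
    define G where "G w = (\<lambda>i\<in>{..<m}. g i w)" for w
    have GP: "G w \<in> PiE {..<m} (\<lambda>_. verts H)" if "w \<in> verts F" for w
      unfolding G_def restrict_PiE_iff using g that by (auto simp: hom_def)
    have "hom F (power H m) G"
      unfolding hom_def
    proof (intro conjI allI impI ballI)
      fix w assume "w \<in> verts F" then show "G w \<in> verts (power H m)" using GP unfolding verts_power by blast
    next
      fix w w' assume ww: "adj F w w'"
      then have "w \<in> verts F" "w' \<in> verts F" using wfF[unfolded wf_graph_def] by auto
      moreover have "\<forall>i<m. adj H (G w i) (G w' i)" using g ww by (auto simp: G_def hom_def)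
      ultimately show "adj (power H m) (G w) (G w')" using GP adj_power by blast
    qed
    then have "hom F H (f \<circ> G)" using hf by (auto simp: hom_def)
    then have "(f \<circ> G) u \<noteq> (f \<circ> G) v" using B by blast
    moreover have "G u = t"
    proof -
      have "G u = restrict t {..<m}" unfolding G_def using g by (intro restrict_ext) auto
      then show ?thesis using ts(1) PiE_restrict by metis
    qed
    moreover have "G v = s"
    proof -
      have "G v = restrict s {..<m}" unfolding G_def using g by (intro restrict_ext) auto
      then show ?thesis using ts(2) PiE_restrict by metis
    qed
    ultimately show ?thesis by simp
  qed
  have "\<exists>i<m. \<forall>t\<in>PiE {..<m} (\<lambda>_. verts H). f t = t i"
    by (rule clone_lemma[OF three fV NE ID]) auto
  then show "\<exists>i<m. \<forall>x\<in>verts (power H m). f x = x i" using verts_power by metis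
qed




lemma dir2:
  fixes H :: "'a ugraph"
  assumes core: "core H" and three: "a \<in> verts H" "b \<in> verts H" "a \<noteq> b"
  and proj: "projective H"
  shows "\<exists>(F :: nat ugraph) u v. wf_graph F \<and> u \<in> verts F \<and> v \<in> verts F
            \<and> (\<forall>x\<in>verts H. \<forall>y\<in>verts H. x \<noteq> y \<longrightarrow>
                 (\<exists>f. hom F H f \<and> f u = x \<and> f v = y))
            \<and> (\<forall>f. hom F H f \<longrightarrow> f u \<noteq> f v)"
proof -
  have wf: "wf_graph H" using core core_def by auto
  define V where "V = verts H"
  have finV: "finite V" using wf[unfolded wf_graph_def] V_def by auto
  define D where "D = {(x, y). x \<in> V \<and> y \<in> V \<and> x \<noteq> y}"
  have finD: "finite D" unfolding D_def
    by (rule finite_subset[of _ "V \<times> V"]) (use finV in auto)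
  define m where "m = card D"
  obtain e where e: "bij_betw e {0..<m} D" using ex_bij_betw_nat_finite[OF finD] m_def by blast
  have "{(a, b), (b, a)} \<subseteq> D" using three V_def D_def by auto
  then have "card {(a, b), (b, a)} \<le> m" using finD m_def card_mono by blast
  then have m2: "2 \<le> m" using three by auto
  have eD: "i < m \<Longrightarrow> e i \<in> D" for i using e bij_betwE by fastforce
  have eD': "fst (e i) \<in> V \<and> snd (e i) \<in> V \<and> fst (e i) \<noteq> snd (e i)" if "i < m" for i
    using eD[OF that] unfolding D_def by (auto simp: case_prod_beta)
  define P where "P = power H m"
  have vP: "verts P = PiE {..<m} (\<lambda>_. V)" using P_def V_def verts_power by metis
  have aP: "adj P x y \<longleftrightarrow> x \<in> verts P \<and> y \<in> verts P \<and> (\<forall>i<m. adj H (x i) (y i))" for x y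
    using P_def V_def vP adj_power by metis
  define us where "us = (\<lambda>i\<in>{..<m}. fst (e i))"
  define vs where "vs = (\<lambda>i\<in>{..<m}. snd (e i))"
  have usP: "us \<in> verts P" unfolding vP us_def restrict_PiE_iff using eD' by auto
  have vsP: "vs \<in> verts P" unfolding vP vs_def restrict_PiE_iff using eD' by auto
  have finP: "finite (verts P)" unfolding vP using finV by (simp add: finite_PiE)
  define N where "N = card (verts P)"
  obtain g where g: "bij_betw g {0..<N} (verts P)" using ex_bij_betw_nat_finite[OF finP] N_def by blast
  define F where "F = \<lparr>verts = {0..<N}, adj = (\<lambda>x y. x < N \<and> y < N \<and> adj P (g x) (g y))\<rparr>"
  define ig where "ig = inv_into {0..<N} g"
  have igI: "t \<in> verts P \<Longrightarrow> ig t \<in> {0..<N}" for t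
    using g ig_def by (metis bij_betw_imp_surj_on inv_into_into)
  have gig: "t \<in> verts P \<Longrightarrow> g (ig t) = t" for t
    using g ig_def by (metis bij_betw_imp_surj_on f_inv_into_f)
  have gP: "x \<in> {0..<N} \<Longrightarrow> g x \<in> verts P" for x using g bij_betwE by blast
  define u where "u = ig us"
  define v where "v = ig vs"
  have adjPs: "adj P x y \<Longrightarrow> adj P y x" for x y
    using wf[unfolded wf_graph_def] aP by blast
  have wfF: "wf_graph F" unfolding wf_graph_def F_def using adjPs by auto
  have uF: "u \<in> verts F" using igI usP u_def F_def by auto
  have vF: "v \<in> verts F" using igI vsP v_def F_def by auto
  have projA: "\<exists>f. hom F H f \<and> f u = x \<and> f v = y" if "x \<in> verts H" "y \<in> verts H" "x \<noteq> y" for x y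
  proof -
    have "(x, y) \<in> D" using that D_def V_def by auto
    then obtain i where i: "i < m" "e i = (x, y)" using e unfolding bij_betw_def by force
    have "hom F H (\<lambda>z. g z i)" unfolding hom_def
    proof (intro conjI allI impI ballI)
      fix z assume "z \<in> verts F"
      then have "g z \<in> verts P" using gP F_def by auto
      then show "g z i \<in> verts H" using vP V_def i by auto
    next
      fix z w assume "adj F z w"
      then show "adj H (g z i) (g w i)" using aP i F_def by auto
    qed
    moreover have "g u i = x" using gig usP u_def us_def i by auto
    moreover have "g v i = y" using gig vsP v_def vs_def i by auto
    ultimately show ?thesis by blast
  qed
  have projB: "h u \<noteq> h v" if h: "hom F H h" for h
  proof -
    define f' where "f' t = h (ig t)" for t
    have f'V: "t \<in> verts P \<Longrightarrow> f' t \<in> V" for t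
      using h igI F_def f'_def V_def unfolding hom_def by auto
    have f'adj: "adj P t s \<Longrightarrow> adj H (f' t) (f' s)" for t s
    proof -
      assume ts: "adj P t s"
      then have "t \<in> verts P" "s \<in> verts P" using aP by auto
      then have "adj F (ig t) (ig s)" using ts igI gig F_def by auto
      then show ?thesis using h f'_def unfolding hom_def by auto
    qed
    define diag where "diag x = (\<lambda>i\<in>{..<m}. x)" for x :: 'a
    have dP: "x \<in> V \<Longrightarrow> diag x \<in> verts P" for x using vP diag_def by (simp add: restrict_PiE_iff)
    define \<sigma> where "\<sigma> x = f' (diag x)" for x
    have hs: "hom H H \<sigma>" unfolding hom_def
    proof (intro conjI allI impI ballI)
      fix x assume "x \<in> verts H" then show "\<sigma> x \<in> verts H" using dP f'V \<sigma>_def V_def by auto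
    next
      fix x y assume xy: "adj H x y"
      then have "x \<in> V" "y \<in> V" using wf[unfolded wf_graph_def] V_def by auto
      then have "adj P (diag x) (diag y)" using aP dP xy diag_def by auto
      then show "adj H (\<sigma> x) (\<sigma> y)" using f'adj \<sigma>_def by auto
    qed
    note ce = core_endo[OF core hs]
    define \<tau> where "\<tau> = inv_into V \<sigma>"
    have ts: "x \<in> V \<Longrightarrow> \<tau> (\<sigma> x) = x" for x using ce(2) \<tau>_def V_def by (simp add: inv_into_f_f)
    have st: "y \<in> V \<Longrightarrow> \<sigma> (\<tau> y) = y" for y using ce(1) \<tau>_def V_def by (metis f_inv_into_f)
    have tV: "y \<in> V \<Longrightarrow> \<tau> y \<in> V" for y using ce(1) \<tau>_def V_def by (metis inv_into_into)
    have "idempotent_hom H m (\<lambda>t. \<tau> (f' t))"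
      unfolding idempotent_hom_def hom_def
    proof (intro conjI allI impI ballI)
      fix t assume "t \<in> verts (power H m)"
      then show "\<tau> (f' t) \<in> verts H" using tV f'V P_def V_def by auto
    next
      fix t s assume "adj (power H m) t s"
      then have "adj H (f' t) (f' s)" using f'adj P_def by auto
      then obtain x y where xy: "adj H x y" "\<sigma> x = f' t" "\<sigma> y = f' s" using ce(3) by blast
      then have "x \<in> V" "y \<in> V" using wf[unfolded wf_graph_def] V_def by auto
      then show "adj H (\<tau> (f' t)) (\<tau> (f' s))" using xy ts by metis
    next
      fix x assume "x \<in> verts H"
      then show "\<tau> (f' (\<lambda>i\<in>{..<m}. x)) = x" using ts \<sigma>_def diag_def V_def by auto
    qed
    then obtain i where i: "i < m" "\<forall>t\<in>verts P. \<tau> (f' t) = t i"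
      using proj m2 unfolding projective_def P_def by blast
    have fs: "t \<in> verts P \<Longrightarrow> f' t = \<sigma> (t i)" for t
      using i st f'V by metis
    have "h u = \<sigma> (fst (e i))" using fs[OF usP] f'_def u_def us_def i by auto
    moreover have "h v = \<sigma> (snd (e i))" using fs[OF vsP] f'_def v_def vs_def i by auto
    ultimately show ?thesis using eD'[OF i(1)] ce(2) V_def inj_on_eq_iff by metis
  qed
  show ?thesis using wfF uF vF projA projB by blast
qed


theorem proposition12:
  fixes H :: "'a ugraph"
  assumes "core H" and "connected H" and "\<not> trivial_graph H"
  shows "(\<exists>(F :: nat ugraph) u v. wf_graph F \<and> u \<in> verts F \<and> v \<in> verts F
            \<and> (\<forall>x\<in>verts H. \<forall>y\<in>verts H. x \<noteq> y \<longrightarrow>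
                 (\<exists>f. hom F H f \<and> f u = x \<and> f v = y))
            \<and> (\<forall>f. hom F H f \<longrightarrow> f u \<noteq> f v))
         \<longleftrightarrow> projective H"
proof -
  have wf: "wf_graph H" using assms(1) core_def by auto
  obtain a b c where abc: "a \<in> verts H" "b \<in> verts H" "c \<in> verts H" "a \<noteq> b" "a \<noteq> c" "b \<noteq> c"
    using three_verts[OF assms] by blast
  show ?thesis
  proof
    assume "\<exists>(F :: nat ugraph) u v. wf_graph F \<and> u \<in> verts F \<and> v \<in> verts F
            \<and> (\<forall>x\<in>verts H. \<forall>y\<in>verts H. x \<noteq> y \<longrightarrow>
                 (\<exists>f. hom F H f \<and> f u = x \<and> f v = y))
            \<and> (\<forall>f. hom F H f \<longrightarrow> f u \<noteq> f v)"
    then obtain F :: "nat ugraph" and u v where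
      F: "wf_graph F" "\<forall>x\<in>verts H. \<forall>y\<in>verts H. x \<noteq> y \<longrightarrow> (\<exists>f. hom F H f \<and> f u = x \<and> f v = y)"
         "\<forall>f. hom F H f \<longrightarrow> f u \<noteq> f v" by blast
    show "projective H" by (rule dir1[OF wf abc F])
  next
    assume "projective H"
    then show "\<exists>(F :: nat ugraph) u v. wf_graph F \<and> u \<in> verts F \<and> v \<in> verts F
            \<and> (\<forall>x\<in>verts H. \<forall>y\<in>verts H. x \<noteq> y \<longrightarrow>
                 (\<exists>f. hom F H f \<and> f u = x \<and> f v = y))
            \<and> (\<forall>f. hom F H f \<longrightarrow> f u \<noteq> f v)"
      using dir2[OF assms(1) abc(1,2,4)] by blast
  qed
qed

end
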